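(* Let $T$ be a tree of order $n\ge 3$. Then $\chi'_{qm\Sigma}(T)=2$ if $T$ has no two adjacent vertices of equal even degree, and $\chi'_{qm\Sigma}(T)=3$ otherwise.
   Context: A $k$-edge-coloring of $G$ is any map $c:E(G)\to\{1,\dots,k\}$ (adjacent edges may share colors). It induces $\sigma_c(v)=\sum_{u\in N(v)}c(vu)$. The coloring is neighbor sum distinguishing (NSD) if $\sigma_c(u)\ne\sigma_c(v)$ for every edge $uv$. It is quasi-majority if every vertex $v$ is incident to at most $\lceil d(v)/2\rceil$ edges of each single color. $\chi'_{qm\Sigma}(G)$ denotes the least $k$ such that $G$ has a $k$-edge-coloring that is both quasi-majority and NSD. *)

theory Defs
  imports Complex_Main
begin

definition simple_graph :: "'a set \<Rightarrow> 'a set set \<Rightarrow> bool" where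
  "simple_graph V E \<longleftrightarrow> finite V \<and> (\<forall>e\<in>E. e \<subseteq> V \<and> card e = 2)"

definition nbhd :: "'a set set \<Rightarrow> 'a \<Rightarrow> 'a set" where
  "nbhd E v = {u. {v, u} \<in> E}"

definition deg :: "'a set set \<Rightarrow> 'a \<Rightarrow> nat" where
  "deg E v = card (nbhd E v)"

definition connected_graph :: "'a set \<Rightarrow> 'a set set \<Rightarrow> bool" where
  "connected_graph V E \<longleftrightarrow>
     (\<forall>u\<in>V. \<forall>v\<in>V. (u, v) \<in> {(x, y). {x, y} \<in> E}\<^sup>*)"

definition is_cycle :: "'a set set \<Rightarrow> 'a list \<Rightarrow> bool" where
  "is_cycle E vs \<longleftrightarrow> length vs \<ge> 3 \<and> distinct vs \<and>
     (\<forall>i. i + 1 < length vs \<longrightarrow> {vs ! i, vs ! (i + 1)} \<in> E) \<and>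
     {last vs, hd vs} \<in> E"

definition acyclic_graph :: "'a set \<Rightarrow> 'a set set \<Rightarrow> bool" where
  "acyclic_graph V E \<longleftrightarrow> \<not> (\<exists>vs. set vs \<subseteq> V \<and> is_cycle E vs)"

definition is_tree :: "'a set \<Rightarrow> 'a set set \<Rightarrow> bool" where
  "is_tree V E \<longleftrightarrow> simple_graph V E \<and> V \<noteq> {} \<and> connected_graph V E \<and> acyclic_graph V E"

definition edge_coloring :: "'a set set \<Rightarrow> nat \<Rightarrow> ('a set \<Rightarrow> nat) \<Rightarrow> bool" where
  "edge_coloring E k c \<longleftrightarrow> (\<forall>e\<in>E. c e \<in> {1..k})"

definition sigma :: "'a set set \<Rightarrow> ('a set \<Rightarrow> nat) \<Rightarrow> 'a \<Rightarrow> nat" where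
  "sigma E c v = (\<Sum>u\<in>nbhd E v. c {v, u})"

definition nsd :: "'a set set \<Rightarrow> ('a set \<Rightarrow> nat) \<Rightarrow> bool" where
  "nsd E c \<longleftrightarrow> (\<forall>u v. {u, v} \<in> E \<longrightarrow> sigma E c u \<noteq> sigma E c v)"

definition quasi_majority :: "'a set \<Rightarrow> 'a set set \<Rightarrow> ('a set \<Rightarrow> nat) \<Rightarrow> bool" where
  "quasi_majority V E c \<longleftrightarrow>
     (\<forall>v\<in>V. \<forall>i. card {u \<in> nbhd E v. c {v, u} = i} \<le> nat \<lceil>real (deg E v) / 2\<rceil>)"

definition chi_qm_sigma :: "'a set \<Rightarrow> 'a set set \<Rightarrow> nat" where
  "chi_qm_sigma V E = (LEAST k. \<exists>c. edge_coloring E k c \<and> quasi_majority V E c \<and> nsd E c)"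

end

theory Submission
  imports Defs
begin


definition QM :: "nat list \<Rightarrow> bool" where
  "QM K \<longleftrightarrow> (\<forall>i. length (filter (\<lambda>x. x = i) K) \<le> (length K + 1) div 2)"

lemma root_list: "\<exists>L. length L = m \<and> set L \<subseteq> {1,2} \<and> QM L"
proof -
  let ?L = "replicate (m div 2) (1::nat) @ replicate (m - m div 2) 2"
  have "QM ?L" unfolding QM_def by (auto simp: filter_replicate)
  moreover have "set ?L \<subseteq> {1,2}" by auto
  ultimately show ?thesis by (intro exI[of _ ?L]) auto
qed

lemma len_le_sum: "\<forall>x\<in>set K. (1::nat) \<le> x \<Longrightarrow> length K \<le> sum_list K"
  by (induction K) auto

lemma leaf_ok:
  assumes "a \<in> set K" "length K \<ge> 2" "\<forall>x\<in>set K. (1::nat) \<le> x"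
  shows "sum_list K \<noteq> a"
proof -
  have "sum_list (map id K) = id a + sum_list (map id (remove1 a K))"
    using assms(1) by (rule sum_list_map_remove1)
  hence e: "sum_list K = a + sum_list (remove1 a K)" by simp
  have "length (remove1 a K) \<ge> 1" using assms(1,2) by (simp add: length_remove1)
  moreover have "\<forall>x\<in>set (remove1 a K). 1 \<le> x" using assms(3)
    by (meson notin_set_remove1)
  ultimately have g: "sum_list (remove1 a K) \<ge> 1" using len_le_sum by fastforce
  show ?thesis using e g by linarith
qed

lemma three_step:
  assumes a: "a \<in> {1,2,3::nat}" and m: "m \<ge> 1"
  shows "\<exists>L. length L = m \<and> set L \<subseteq> {1,2,3} \<and> QM (a#L) \<and> sum_list (a#L) \<noteq> s"
proof -
  define b :: nat where "b = (if a = 1 then 2 else 1)"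
  define b' :: nat where "b' = (if a = 3 then 2 else 3)"
  have dist: "a \<noteq> b" "a \<noteq> b'" "b \<noteq> b'" using a unfolding b_def b'_def by auto
  have bs: "b \<in> {1,2,3}" "b' \<in> {1,2,3}" unfolding b_def b'_def by auto
  define L1 where "L1 = replicate (m div 2) a @ replicate (m - m div 2) b"
  define L2 where "L2 = replicate (m div 2) a @ b' # replicate (m - m div 2 - 1) b"
  have l1: "length L1 = m" "length L2 = m" unfolding L1_def L2_def using m by auto
  have s1: "set L1 \<subseteq> {1,2,3}" "set L2 \<subseteq> {1,2,3}" unfolding L1_def L2_def using a bs by auto
  have q1: "QM (a#L1)" unfolding QM_def L1_def using dist by (auto simp: filter_replicate)
  have q2: "QM (a#L2)" unfolding QM_def L2_def using dist m by (auto simp: filter_replicate)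
  have "sum_list (a#L1) + b' = sum_list (a#L2) + b"
    unfolding L1_def L2_def using m by (simp add: sum_list_replicate) (cases "m - m div 2", auto)
  hence "sum_list (a#L1) \<noteq> sum_list (a#L2)" using dist by auto
  thus ?thesis using l1 s1 q1 q2 by metis
qed

lemma two_step:
  assumes a: "a \<in> {1,2::nat}" and z: "m = 0 \<longrightarrow> s \<noteq> a"
    and o: "odd m \<longrightarrow> 2*s \<noteq> 3*(m+1)"
  shows "\<exists>L. length L = m \<and> set L \<subseteq> {1,2} \<and> QM (a#L) \<and> sum_list (a#L) \<noteq> s"
proof -
  define b :: nat where "b = 3 - a"
  have dist: "a \<noteq> b" "a + b = 3" "b \<in> {1,2}" using a unfolding b_def by auto
  consider "m = 0" | "odd m" | "even m" "m \<ge> 2" by fastforce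
  then show ?thesis
  proof cases
    case 1
    then show ?thesis using z a by (intro exI[of _ "[]"]) (auto simp: QM_def)
  next
    case 2
    define L where "L = replicate (m div 2) a @ replicate (m div 2 + 1) b"
    have mm: "m = 2 * (m div 2) + 1" using 2 by presburger
    have "length L = m" unfolding L_def using mm by simp
    moreover have "set L \<subseteq> {1,2}" unfolding L_def using a dist by auto
    moreover have "QM (a#L)" unfolding QM_def L_def using dist mm by (auto simp: filter_replicate)
    moreover have "2 * sum_list (a#L) = 3*(m+1)"
    proof -
      have "sum_list (a#L) = (m div 2 + 1) * (a + b)"
        unfolding L_def by (simp add: sum_list_replicate algebra_simps)
      thus ?thesis using dist mm by simp
    qed
    ultimately show ?thesis using o 2 by metis
  next
    case 3
    define L1 where "L1 = replicate (m div 2) a @ replicate (m div 2) b"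
    define L2 where "L2 = replicate (m div 2 - 1) a @ replicate (m div 2 + 1) b"
    have mm: "m = 2 * (m div 2)" "m div 2 \<ge> 1" using 3 by presburger+
    have l1: "length L1 = m" "length L2 = m" unfolding L1_def L2_def using mm by auto
    have s1: "set L1 \<subseteq> {1,2}" "set L2 \<subseteq> {1,2}" unfolding L1_def L2_def using a dist by auto
    have q1: "QM (a#L1)" unfolding QM_def L1_def using dist mm by (auto simp: filter_replicate)
    have q2: "QM (a#L2)" unfolding QM_def L2_def using dist mm by (auto simp: filter_replicate)
    have "sum_list (a#L1) + b = sum_list (a#L2) + a"
      unfolding L1_def L2_def using mm
      by (simp add: sum_list_replicate algebra_simps) (cases "m div 2", auto simp: algebra_simps)
    hence "sum_list (a#L1) \<noteq> sum_list (a#L2)" using dist by auto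
    thus ?thesis using l1 s1 q1 q2 by metis
  qed
qed

lemma two_counts: "set K \<subseteq> {1,2::nat} \<Longrightarrow>
  sum_list K = length (filter (\<lambda>x. x = 1) K) + 2 * length (filter (\<lambda>x. x = 2) K) \<and>
  length K = length (filter (\<lambda>x. x = 1) K) + length (filter (\<lambda>x. x = 2) K)"
  by (induction K) auto

lemma two_bound:
  assumes "set K \<subseteq> {1,2::nat}" "QM K"
  shows "3*length K \<le> 2*sum_list K + 1 \<and> 2*sum_list K \<le> 3*length K + 1"
proof -
  have c: "length (filter (\<lambda>x. x = 1) K) \<le> (length K + 1) div 2"
          "length (filter (\<lambda>x. x = 2) K) \<le> (length K + 1) div 2"
    using assms(2) unfolding QM_def by (auto simp: filter_replicate)
  show ?thesis using two_counts[OF assms(1)] c by linarith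
qed



definition enm :: "'a set \<Rightarrow> 'a list" where
  "enm A = (SOME xs. set xs = A \<and> distinct xs)"

lemma enm: "finite A \<Longrightarrow> set (enm A) = A \<and> distinct (enm A)"
  unfolding enm_def by (rule someI_ex) (rule finite_distinct_list)

lemma realize: "distinct xs \<Longrightarrow> length L = length xs \<Longrightarrow> \<exists>f. map f xs = L"
proof (induction xs arbitrary: L)
  case Nil thus ?case by simp
next
  case (Cons x xs)
  then obtain l L' where L: "L = l # L'" by (cases L) auto
  with Cons obtain f where f: "map f xs = L'" by auto
  have "map (f(x := l)) xs = map f xs" using Cons.prems(1) by (intro map_cong) auto
  hence "map (f(x := l)) (x # xs) = L" using f L by (simp only: list.map fun_upd_same)
  thus ?case by blast
qed

locale rtree =
  fixes V :: "'a set" and E :: "'a set set" and r :: 'a and par :: "'a \<Rightarrow> 'a" and h :: "'a \<Rightarrow> nat"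
  assumes sg: "simple_graph V E" and rV: "r \<in> V"
    and parV: "\<And>v. v \<in> V \<Longrightarrow> v \<noteq> r \<Longrightarrow> par v \<in> V \<and> {v, par v} \<in> E \<and> h v = Suc (h (par v))"
    and edges: "\<And>e. e \<in> E \<Longrightarrow> \<exists>v\<in>V. v \<noteq> r \<and> e = {v, par v}"
begin

definition ch where "ch v = {u\<in>V. u \<noteq> r \<and> par u = v}"
definition Kx where "Kx x v f = (if v = r then [] else [x]) @ map f (enm (ch v))"
definition col where "col g e = g (THE w. w \<in> V \<and> w \<noteq> r \<and> e = {w, par w})"

lemma finV: "finite V" using sg unfolding simple_graph_def by auto

lemma edge_sub: "e \<in> E \<Longrightarrow> e \<subseteq> V \<and> card e = 2" using sg unfolding simple_graph_def by auto

lemma ch_fin: "finite (ch v)" using finV unfolding ch_def by auto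

lemma enum_ch: "set (enm (ch v)) = ch v" "distinct (enm (ch v))" "length (enm (ch v)) = card (ch v)"
  using enm[OF ch_fin[of v]] distinct_card by metis+

lemma par_ne: "v \<in> V \<Longrightarrow> v \<noteq> r \<Longrightarrow> par v \<noteq> v" using parV[of v] by auto

lemma par_notin: "v \<in> V \<Longrightarrow> v \<noteq> r \<Longrightarrow> par v \<notin> ch v"
  using parV[of v] parV[of "par v"] unfolding ch_def by auto

lemma nbhd_eq: assumes "v \<in> V" shows "nbhd E v = ch v \<union> (if v = r then {} else {par v})"
proof (intro set_eqI iffI)
  fix u assume "u \<in> nbhd E v"
  hence "{v, u} \<in> E" unfolding nbhd_def by auto
  then obtain w where w: "w \<in> V" "w \<noteq> r" "{v, u} = {w, par w}" using edges by blast
  hence "(v = w \<and> u = par w) \<or> (v = par w \<and> u = w)" by (simp add: doubleton_eq_iff)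
  thus "u \<in> ch v \<union> (if v = r then {} else {par v})" using w unfolding ch_def by auto
next
  fix u assume "u \<in> ch v \<union> (if v = r then {} else {par v})"
  hence "(u \<in> V \<and> u \<noteq> r \<and> par u = v) \<or> (v \<noteq> r \<and> u = par v)" unfolding ch_def by (auto split: if_splits)
  thus "u \<in> nbhd E v" using parV[of u] parV[of v] assms unfolding nbhd_def by (auto simp: insert_commute)
qed

lemma edge_uniq:
  assumes "w \<in> V" "w \<noteq> r" "w' \<in> V" "w' \<noteq> r" "{w, par w} = {w', par w'}"
  shows "w = w'"
proof (rule ccontr)
  assume "w \<noteq> w'"
  then have e: "par w = w'" "par w' = w" using assms(5) by (metis doubleton_eq_iff)+
  have "h w = Suc (h w')" using parV[OF assms(1,2)] e by simp
  moreover have "h w' = Suc (h w)" using parV[OF assms(3,4)] e by simp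
  ultimately show False by simp
qed

lemma col_eq: assumes "w \<in> V" "w \<noteq> r" shows "col g {w, par w} = g w"
proof -
  have "(THE x. x \<in> V \<and> x \<noteq> r \<and> {w, par w} = {x, par x}) = w"
    using assms edge_uniq by (intro the_equality) auto
  thus ?thesis unfolding col_def by simp
qed

lemma col_ch: assumes "v \<in> V" "u \<in> ch v" shows "col g {v, u} = g u"
proof -
  have "{v, u} = {u, par u}" "u \<in> V" "u \<noteq> r" using assms unfolding ch_def by auto
  thus ?thesis using col_eq by metis
qed

lemma deg_eq: assumes "v \<in> V" shows "deg E v = length (Kx x v f)"
proof (cases "v = r")
  case True thus ?thesis using nbhd_eq[OF assms] enum_ch unfolding deg_def Kx_def by simp
next
  case False
  have "card (ch v \<union> {par v}) = card (ch v) + 1"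
    using par_notin[OF assms False] ch_fin by simp
  thus ?thesis using False nbhd_eq[OF assms] enum_ch unfolding deg_def Kx_def by simp
qed

lemma sigma_eq: assumes "v \<in> V" shows "sigma E (col g) v = sum_list (Kx (g v) v g)"
proof -
  have "(\<Sum>u\<in>ch v. col g {v, u}) = (\<Sum>u\<in>ch v. g u)"
    by (rule sum.cong) (auto simp: col_ch[OF assms])
  also have "... = sum_list (map g (enm (ch v)))"
    using sum_list_distinct_conv_sum_set[OF enum_ch(2)] enum_ch(1) by metis
  finally have s: "(\<Sum>u\<in>ch v. col g {v, u}) = sum_list (map g (enm (ch v)))" .
  show ?thesis
  proof (cases "v = r")
    case True thus ?thesis using s nbhd_eq[OF assms] unfolding sigma_def Kx_def by simp
  next
    case False
    have "sigma E (col g) v = col g {v, par v} + (\<Sum>u\<in>ch v. col g {v, u})"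
      using nbhd_eq[OF assms] False par_notin[OF assms False] ch_fin unfolding sigma_def by simp
    thus ?thesis using s col_eq[OF assms False] False unfolding Kx_def by simp
  qed
qed

lemma cnt_eq: assumes "v \<in> V"
  shows "card {u\<in>nbhd E v. col g {v, u} = i} = length (filter (\<lambda>x. x = i) (Kx (g v) v g))"
proof -
  have s: "card {u\<in>ch v. col g {v, u} = i} = length (filter (\<lambda>x. x = i) (map g (enm (ch v))))"
  proof -
    have "{u\<in>ch v. col g {v, u} = i} = {u. g u = i} \<inter> set (enm (ch v))"
      using col_ch[OF assms] enum_ch(1) by auto
    thus ?thesis using distinct_length_filter[OF enum_ch(2), of "\<lambda>u. g u = i"]
      by (simp add: length_filter_map comp_def)
  qed
  show ?thesis
  proof (cases "v = r")
    case True thus ?thesis using s nbhd_eq[OF assms] unfolding Kx_def by simp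
  next
    case False
    have "{u\<in>nbhd E v. col g {v, u} = i} =
      (if g v = i then insert (par v) {u\<in>ch v. col g {v, u} = i} else {u\<in>ch v. col g {v, u} = i})"
      using nbhd_eq[OF assms] False col_eq[OF assms False] by auto
    moreover have "par v \<notin> {u\<in>ch v. col g {v, u} = i}" using par_notin[OF assms False] by auto
    moreover have "finite {u\<in>ch v. col g {v, u} = i}" using ch_fin by auto
    ultimately show ?thesis using s False unfolding Kx_def by auto
  qed
qed

end


lemma ceil_half: "nat \<lceil>real d / 2\<rceil> = (d + 1) div 2"
proof -
  obtain k where "d = 2*k \<or> d = 2*k+1" by (metis oddE evenE)
  then show ?thesis
  proof
    assume d: "d = 2*k"
    have "real d / 2 = real k" using d by simp
    thus ?thesis using d by simp
  next
    assume d: "d = 2*k+1"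
    have "\<lceil>real d / 2\<rceil> = int k + 1" using d by (simp add: ceiling_eq_iff)
    thus ?thesis using d by simp
  qed
qed

context rtree begin

definition Loc where "Loc P g v \<longleftrightarrow> set (Kx (g v) v g) \<subseteq> P \<and> QM (Kx (g v) v g) \<and>
   (v \<noteq> r \<longrightarrow> sum_list (Kx (g v) v g) \<noteq> sum_list (Kx (g (par v)) (par v) g))"

lemma ch_mem: "v \<in> V \<Longrightarrow> v \<noteq> r \<Longrightarrow> v \<in> ch (par v)" unfolding ch_def by auto

lemma g_in_K: assumes "v \<in> V" "v \<noteq> r" shows "g v \<in> set (Kx x (par v) g)"
  using ch_mem[OF assms] enum_ch(1)[of "par v"] unfolding Kx_def by auto

lemma levels:
  assumes root: "\<exists>L. length L = card (ch r) \<and> set L \<subseteq> P \<and> QM L"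
  and step: "\<And>v a K. v \<in> V \<Longrightarrow> v \<noteq> r \<Longrightarrow> a \<in> P \<Longrightarrow> set K \<subseteq> P \<Longrightarrow> QM K \<Longrightarrow>
      length K = deg E (par v) \<Longrightarrow> a \<in> set K \<Longrightarrow>
      \<exists>L. length L = card (ch v) \<and> set L \<subseteq> P \<and> QM (a#L) \<and> sum_list (a#L) \<noteq> sum_list K"
  shows "\<exists>g. \<forall>v\<in>V. h v < N \<longrightarrow> Loc P g v"
proof (induction N)
  case 0 show ?case by simp
next
  case (Suc N)
  then obtain g where g: "\<forall>v\<in>V. h v < N \<longrightarrow> Loc P g v" by blast
  define Good where "Good v f \<longleftrightarrow> set (Kx (g v) v f) \<subseteq> P \<and> QM (Kx (g v) v f) \<and>
     (v \<noteq> r \<longrightarrow> sum_list (Kx (g v) v f) \<noteq> sum_list (Kx (g (par v)) (par v) g))" for v f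
  have ex: "\<forall>v. \<exists>f. v \<in> V \<and> h v = N \<longrightarrow> Good v f"
  proof
    fix v
    show "\<exists>f. v \<in> V \<and> h v = N \<longrightarrow> Good v f"
    proof (cases "v \<in> V \<and> h v = N")
      case False thus ?thesis by blast
    next
      case True
      show ?thesis
      proof (cases "v = r")
        case vr: True
        obtain L where L: "length L = card (ch r)" "set L \<subseteq> P" "QM L" using root by blast
        obtain f where f: "map f (enm (ch r)) = L" using realize[OF enum_ch(2)] L(1) enum_ch(3) by metis
        have "Kx (g v) v f = L" using vr f unfolding Kx_def by simp
        hence "Good v f" using L vr unfolding Good_def by simp
        thus ?thesis by blast
      next
        case vr: False
        let ?p = "par v"
        have p: "?p \<in> V" "h ?p < N" using parV[of v] True vr by auto
        have lp: "Loc P g ?p" using g p by auto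
        let ?K = "Kx (g ?p) ?p g"
        have a: "g v \<in> set ?K" using g_in_K[of v g "g ?p"] True vr by blast
        have K: "set ?K \<subseteq> P" "QM ?K" using lp unfolding Loc_def by auto
        have dK: "length ?K = deg E ?p" using deg_eq[OF p(1), of "g ?p" g] by simp
        obtain L where L: "length L = card (ch v)" "set L \<subseteq> P" "QM (g v # L)"
           "sum_list (g v # L) \<noteq> sum_list ?K"
          using step[OF _ vr _ K dK a] True a K by blast
        obtain f where f: "map f (enm (ch v)) = L" using realize[OF enum_ch(2)] L(1) enum_ch(3) by metis
        have "Kx (g v) v f = g v # L" using vr f unfolding Kx_def by simp
        hence "Good v f" using L vr a K unfolding Good_def by auto
        thus ?thesis by blast
      qed
    qed
  qed
  then obtain F where F: "\<And>v. v \<in> V \<Longrightarrow> h v = N \<Longrightarrow> Good v (F v)" by metis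
  define g' where "g' u = (if u \<in> V \<and> u \<noteq> r \<and> h u = Suc N then F (par u) u else g u)" for u
  have agree: "g' w = g w" if "h w \<le> N" for w using that unfolding g'_def by auto
  have Klt: "Kx (g' w) w g' = Kx (g w) w g" if "w \<in> V" "h w < N" for w
  proof -
    have "map g' (enm (ch w)) = map g (enm (ch w))"
    proof (rule map_cong[OF refl])
      fix u assume "u \<in> set (enm (ch w))"
      hence "u \<in> V" "u \<noteq> r" "par u = w" using enum_ch(1) unfolding ch_def by auto
      hence "h u \<le> N" using parV[of u] that by auto
      thus "g' u = g u" by (rule agree)
    qed
    thus ?thesis using agree[of w] that unfolding Kx_def by simp
  qed
  have Keq: "Kx (g' w) w g' = Kx (g w) w (F w)" if "w \<in> V" "h w = N" for w
  proof -
    have "map g' (enm (ch w)) = map (F w) (enm (ch w))"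
    proof (rule map_cong[OF refl])
      fix u assume "u \<in> set (enm (ch w))"
      hence "u \<in> V" "u \<noteq> r" "par u = w" using enum_ch(1) unfolding ch_def by auto
      hence "h u = Suc N" using parV[of u] that by auto
      thus "g' u = F w u" using \<open>u \<in> V\<close> \<open>u \<noteq> r\<close> \<open>par u = w\<close> unfolding g'_def by auto
    qed
    thus ?thesis using agree[of w] that unfolding Kx_def by simp
  qed
  have "\<forall>v\<in>V. h v < Suc N \<longrightarrow> Loc P g' v"
  proof (intro ballI impI)
    fix v assume v: "v \<in> V" "h v < Suc N"
    have pp: "Kx (g' (par v)) (par v) g' = Kx (g (par v)) (par v) g" if "v \<noteq> r"
      using parV[OF v(1) that] v Klt by auto
    show "Loc P g' v"
    proof (cases "h v < N")
      case True
      thus ?thesis using g v pp Klt[OF v(1) True] unfolding Loc_def by auto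
    next
      case False
      hence "h v = N" using v by auto
      thus ?thesis using F[OF v(1)] pp Keq[OF v(1)] unfolding Loc_def Good_def by auto
    qed
  qed
  thus ?case by blast
qed

lemma GL:
  assumes root: "\<exists>L. length L = card (ch r) \<and> set L \<subseteq> P \<and> QM L"
  and step: "\<And>v a K. v \<in> V \<Longrightarrow> v \<noteq> r \<Longrightarrow> a \<in> P \<Longrightarrow> set K \<subseteq> P \<Longrightarrow> QM K \<Longrightarrow>
      length K = deg E (par v) \<Longrightarrow> a \<in> set K \<Longrightarrow>
      \<exists>L. length L = card (ch v) \<and> set L \<subseteq> P \<and> QM (a#L) \<and> sum_list (a#L) \<noteq> sum_list K"
  shows "\<exists>c. (\<forall>e\<in>E. c e \<in> P) \<and> quasi_majority V E c \<and> nsd E c"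
proof -
  obtain g where g0: "\<forall>v\<in>V. h v < Suc (Max (h ` V)) \<longrightarrow> Loc P g v"
    using levels[OF root step] by blast
  have g: "Loc P g v" if "v \<in> V" for v
    using g0 that finV by (meson Max_ge finite_imageI image_eqI le_imp_less_Suc)
  have c1: "\<forall>e\<in>E. col g e \<in> P"
  proof
    fix e assume "e \<in> E"
    then obtain w where w: "w \<in> V" "w \<noteq> r" "e = {w, par w}" using edges by blast
    have "g w \<in> set (Kx (g (par w)) (par w) g)" using g_in_K[of w g "g (par w)"] w by blast
    moreover have "par w \<in> V" using parV w by auto
    ultimately have "g w \<in> P" using g unfolding Loc_def by blast
    thus "col g e \<in> P" using col_eq[OF w(1,2), of g] w(3) by metis
  qed
  have c2: "quasi_majority V E (col g)"
    unfolding quasi_majority_def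
  proof (intro ballI allI)
    fix v i assume v: "v \<in> V"
    have "card {u \<in> nbhd E v. col g {v, u} = i} = length (filter (\<lambda>x. x = i) (Kx (g v) v g))"
      by (rule cnt_eq[OF v])
    also have "... \<le> (length (Kx (g v) v g) + 1) div 2" using g[OF v] unfolding Loc_def QM_def by auto
    also have "... = nat \<lceil>real (deg E v) / 2\<rceil>" using deg_eq[OF v] ceil_half by metis
    finally show "card {u \<in> nbhd E v. col g {v, u} = i} \<le> nat \<lceil>real (deg E v) / 2\<rceil>" .
  qed
  have c3: "nsd E (col g)"
    unfolding nsd_def
  proof (intro allI impI)
    fix u v assume "{u, v} \<in> E"
    then obtain w where w: "w \<in> V" "w \<noteq> r" "{u, v} = {w, par w}" using edges by blast
    have pw: "par w \<in> V" using parV w by auto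
    have "sigma E (col g) w \<noteq> sigma E (col g) (par w)"
      using g[OF w(1)] w sigma_eq[OF w(1)] sigma_eq[OF pw] unfolding Loc_def by auto
    moreover have "(u = w \<and> v = par w) \<or> (u = par w \<and> v = w)" using w(3) by (metis doubleton_eq_iff)
    ultimately show "sigma E (col g) u \<noteq> sigma E (col g) v" by metis
  qed
  show ?thesis using c1 c2 c3 by blast
qed

end


definition pth :: "'a set set \<Rightarrow> 'a list \<Rightarrow> bool" where
  "pth E vs \<longleftrightarrow> distinct vs \<and> (\<forall>i. i + 1 < length vs \<longrightarrow> {vs ! i, vs ! (i + 1)} \<in> E)"

lemma leaf_exists:
  assumes sg: "simple_graph V E" and ac: "acyclic_graph V E" and ne: "E \<noteq> {}"
  shows "\<exists>l w. l \<in> V \<and> nbhd E l = {w}"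
proof -
  define S where "S = {vs. set vs \<subseteq> V \<and> pth E vs \<and> length vs \<ge> 2}"
  have fin: "finite V" using sg unfolding simple_graph_def by auto
  obtain e where e: "e \<in> E" using ne by blast
  then obtain x y where xy: "x \<noteq> y" "e = {x, y}" using sg unfolding simple_graph_def by (meson card_2_iff)
  have "{x, y} \<subseteq> V" using e xy sg unfolding simple_graph_def by auto
  hence "[x, y] \<in> S" unfolding S_def pth_def using xy e by (auto simp: less_Suc_eq)
  moreover have "\<forall>vs. vs \<in> S \<longrightarrow> length vs < card V + 1"
  proof (intro allI impI)
    fix vs assume "vs \<in> S"
    hence "card (set vs) = length vs" "set vs \<subseteq> V" unfolding S_def pth_def by (auto simp: distinct_card)
    hence "card (set vs) \<le> card V" using card_mono[OF fin] by blast
    thus "length vs < card V + 1" using \<open>card (set vs) = length vs\<close> by simp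
  qed
  ultimately obtain vs where vs: "vs \<in> S" and mx: "\<forall>ys. ys \<in> S \<longrightarrow> length ys \<le> length vs"
    using ex_has_greatest_nat[of "\<lambda>vs. vs \<in> S" "[x,y]" length "card V + 1"] by blast
  have vsS: "set vs \<subseteq> V" "distinct vs" "\<And>i. i + 1 < length vs \<Longrightarrow> {vs ! i, vs ! (i + 1)} \<in> E"
    "length vs \<ge> 2" using vs unfolding S_def pth_def by auto
  define l where "l = vs ! 0"
  define w where "w = vs ! 1"
  have "vs ! 0 \<in> set vs" using vsS(4) by (cases vs) auto
  hence lV: "l \<in> V" using vsS(1) unfolding l_def by blast
  have lw: "{l, w} \<in> E" using vsS(3)[of 0] vsS(4) unfolding l_def w_def by auto
  have "nbhd E l = {w}"
  proof (intro set_eqI iffI)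
    fix y assume "y \<in> nbhd E l"
    hence ly: "{l, y} \<in> E" unfolding nbhd_def by auto
    hence yV: "y \<in> V" and yl: "y \<noteq> l" using sg unfolding simple_graph_def by (auto simp: card_2_iff)
    show "y \<in> {w}"
    proof (rule ccontr)
      assume yw: "y \<notin> {w}"
      show False
      proof (cases "y \<in> set vs")
        case False
        have "y # vs \<in> S" unfolding S_def pth_def
        proof (intro CollectI conjI allI impI)
          show "set (y # vs) \<subseteq> V" using yV vsS by auto
          show "distinct (y # vs)" using False vsS by auto
          show "2 \<le> length (y # vs)" using vsS by auto
          fix i assume i: "i + 1 < length (y # vs)"
          show "{(y # vs) ! i, (y # vs) ! (i + 1)} \<in> E"
          proof (cases i)
            case 0 thus ?thesis using ly unfolding l_def by (simp add: insert_commute)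
          next
            case (Suc k) thus ?thesis using vsS(3)[of k] i by simp
          qed
        qed
        thus False using mx by fastforce
      next
        case True
        then obtain j where j: "j < length vs" "vs ! j = y" by (meson in_set_conv_nth)
        have "j \<noteq> 0" using j yl unfolding l_def by (metis)
        moreover have "j \<noteq> 1" using j yw unfolding w_def by (metis singletonI)
        ultimately have j2: "j \<ge> 2" by auto
        define cyc where "cyc = take (Suc j) vs"
        have lc: "length cyc = Suc j" using j unfolding cyc_def by simp
        have "is_cycle E cyc" unfolding is_cycle_def
        proof (intro conjI allI impI)
          show "3 \<le> length cyc" using lc j2 by simp
          show "distinct cyc" unfolding cyc_def using vsS by simp
          fix i assume "i + 1 < length cyc"
          thus "{cyc ! i, cyc ! (i + 1)} \<in> E" using lc vsS(3)[of i] j unfolding cyc_def by simp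
        next
          have ne: "cyc \<noteq> []" using lc by auto
          have "last cyc = cyc ! j" using last_conv_nth[OF ne] lc by simp
          also have "... = vs ! j" unfolding cyc_def by simp
          finally have "last cyc = vs ! j" .
          moreover have "hd cyc = cyc ! 0" using hd_conv_nth[OF ne] by simp
          moreover have "cyc ! 0 = vs ! 0" unfolding cyc_def by simp
          ultimately show "{last cyc, hd cyc} \<in> E" using ly j unfolding l_def by (simp add: insert_commute)
        qed
        moreover have "set cyc \<subseteq> V" using vsS unfolding cyc_def by (meson order_trans set_take_subset)
        ultimately show False using ac unfolding acyclic_graph_def by blast
      qed
    qed
  next
    fix y assume "y \<in> {w}" thus "y \<in> nbhd E l" using lw unfolding nbhd_def by auto
  qed
  thus ?thesis using lV by blast
qed

lemma conn_remove:
  assumes sg: "simple_graph V E" and cg: "connected_graph V E" and lV: "l \<in> V" and nl: "nbhd E l = {w}"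
  shows "connected_graph (V - {l}) {e \<in> E. l \<notin> e}"
proof -
  let ?R = "{(x, y). {x, y} \<in> E}"
  let ?R' = "{(x, y). {x, y} \<in> {e \<in> E. l \<notin> e}}"
  have wl: "w \<noteq> l" using nl sg unfolding nbhd_def simple_graph_def by (force simp: card_2_iff)
  have key: "(x, y) \<in> ?R\<^sup>* \<Longrightarrow> x \<noteq> l \<Longrightarrow> (y \<noteq> l \<longrightarrow> (x, y) \<in> ?R'\<^sup>*) \<and> (y = l \<longrightarrow> (x, w) \<in> ?R'\<^sup>*)" for x y
  proof (induction rule: rtrancl_induct)
    case base thus ?case by simp
  next
    case (step y z)
    have yz: "{y, z} \<in> E" using step.hyps(2) by simp
    show ?case
    proof (cases "y = l")
      case True
      hence "z \<in> nbhd E l" using yz unfolding nbhd_def by simp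
      hence "z = w" using nl by simp
      thus ?thesis using step.IH step.prems True wl by auto
    next
      case yl: False
      show ?thesis
      proof (cases "z = l")
        case True
        hence "y \<in> nbhd E l" using yz unfolding nbhd_def by (simp add: insert_commute)
        hence "y = w" using nl by simp
        thus ?thesis using step.IH step.prems True yl by auto
      next
        case False
        hence "(y, z) \<in> ?R'" using yz yl by auto
        thus ?thesis using step.IH step.prems yl False by (meson rtrancl.rtrancl_into_rtrancl)
      qed
    qed
  qed
  show ?thesis unfolding connected_graph_def
  proof (intro ballI)
    fix u v assume "u \<in> V - {l}" "v \<in> V - {l}"
    thus "(u, v) \<in> ?R'\<^sup>*" using key[of u v] cg unfolding connected_graph_def by auto
  qed
qed

lemma tree_struct: "is_tree V E \<Longrightarrow> \<exists>r par h. rtree V E r par h"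
proof (induction "card V" arbitrary: V E rule: less_induct)
  case less
  have sg: "simple_graph V E" and ne: "V \<noteq> {}" and cg: "connected_graph V E" and ac: "acyclic_graph V E"
    using less.prems unfolding is_tree_def by auto
  have fin: "finite V" using sg unfolding simple_graph_def by auto
  show ?case
  proof (cases "E = {}")
    case True
    obtain r where r: "r \<in> V" using ne by blast
    have "V = {r}"
    proof (rule ccontr)
      assume "V \<noteq> {r}"
      then obtain u where u: "u \<in> V" "u \<noteq> r" using r by blast
      have "(r, u) \<in> {(x, y). {x, y} \<in> E}\<^sup>*" using cg r u unfolding connected_graph_def by blast
      thus False using True u(2) by (metis (no_types, lifting) converse_rtranclE case_prodD empty_iff mem_Collect_eq)
    qed
    hence "rtree V E r id (\<lambda>_. 0)" unfolding rtree_def using sg r True by auto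
    thus ?thesis by blast
  next
    case False
    obtain l w where lw: "l \<in> V" "nbhd E l = {w}" using leaf_exists[OF sg ac False] by blast
    have lwE: "{l, w} \<in> E" using lw unfolding nbhd_def by auto
    have wV: "w \<in> V" "w \<noteq> l" using lwE sg unfolding simple_graph_def by (auto simp: card_2_iff)
    define V' where "V' = V - {l}"
    define E' where "E' = {e \<in> E. l \<notin> e}"
    have sg': "simple_graph V' E'" using sg fin unfolding simple_graph_def V'_def E'_def by auto
    have cg': "connected_graph V' E'" using conn_remove[OF sg cg lw] unfolding V'_def E'_def .
    have ac': "acyclic_graph V' E'"
    proof -
      have "is_cycle E vs" if "is_cycle E' vs" for vs
        using that unfolding is_cycle_def E'_def by auto
      thus ?thesis using ac unfolding acyclic_graph_def V'_def by blast
    qed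
    have "V' \<noteq> {}" using wV unfolding V'_def by auto
    hence tr: "is_tree V' E'" using sg' cg' ac' unfolding is_tree_def by auto
    have "card V' < card V" unfolding V'_def by (rule card_Diff1_less[OF fin lw(1)])
    then obtain r par h where rt: "rtree V' E' r par h" using less.hyps tr by blast
    interpret T: rtree V' E' r par h by (rule rt)
    define par' where "par' = par(l := w)"
    define h' where "h' = h(l := Suc (h w))"
    have rl: "r \<noteq> l" using T.rV unfolding V'_def by auto
    have "rtree V E r par' h'"
    proof (unfold_locales)
      show "simple_graph V E" by (rule sg)
      show "r \<in> V" using T.rV unfolding V'_def by auto
    next
      fix v assume v: "v \<in> V" "v \<noteq> r"
      show "par' v \<in> V \<and> {v, par' v} \<in> E \<and> h' v = Suc (h' (par' v))"
      proof (cases "v = l")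
        case True thus ?thesis using wV lwE unfolding par'_def h'_def by auto
      next
        case False
        hence "v \<in> V'" using v unfolding V'_def by auto
        hence p: "par v \<in> V'" "{v, par v} \<in> E'" "h v = Suc (h (par v))" using T.parV v by auto
        thus ?thesis using False unfolding par'_def h'_def V'_def E'_def by auto
      qed
    next
      fix e assume e: "e \<in> E"
      show "\<exists>v\<in>V. v \<noteq> r \<and> e = {v, par' v}"
      proof (cases "l \<in> e")
        case True
        obtain a b where ab: "a \<noteq> b" "e = {a, b}" using e sg unfolding simple_graph_def by (meson card_2_iff)
        have "e = {l, w}"
        proof (cases "a = l")
          case True
          hence "b \<in> nbhd E l" using e ab unfolding nbhd_def by simp
          thus ?thesis using lw ab True by auto
        next
          case False
          hence bl: "b = l" using ab \<open>l \<in> e\<close> by auto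
          hence "a \<in> nbhd E l" using e ab unfolding nbhd_def by (simp add: insert_commute)
          thus ?thesis using lw ab bl by auto
        qed
        thus ?thesis using lw rl unfolding par'_def by auto
      next
        case False
        hence "e \<in> E'" using e unfolding E'_def by auto
        then obtain v where "v \<in> V'" "v \<noteq> r" "e = {v, par v}" using T.edges by blast
        thus ?thesis unfolding par'_def V'_def by auto
      qed
    qed
    thus ?thesis by blast
  qed
qed



context rtree begin

lemma leaf_par_deg:
  assumes c3: "card V \<ge> 3" and v: "v \<in> V" "v \<noteq> r" and lf: "ch v = {}"
  shows "deg E (par v) \<ge> 2"
proof (rule ccontr)
  assume nd: "\<not> deg E (par v) \<ge> 2"
  let ?p = "par v"
  have pV: "?p \<in> V" using parV v by auto
  have vin: "v \<in> nbhd E ?p" using nbhd_eq[OF pV] ch_mem[OF v] by auto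
  have fin: "finite (nbhd E ?p)" using nbhd_eq[OF pV] ch_fin by auto
  have "card (nbhd E ?p) \<noteq> 0" using fin vin by auto
  hence "card (nbhd E ?p) = Suc 0" using nd unfolding deg_def by simp
  hence "\<exists>x. nbhd E ?p = {x}" by (simp add: card_1_singleton_iff)
  then obtain x where "nbhd E ?p = {x}" by blast
  hence nb: "nbhd E ?p = {v}" using vin by auto
  have pr: "?p = r"
  proof (rule ccontr)
    assume pr: "?p \<noteq> r"
    hence "par ?p \<in> nbhd E ?p" using nbhd_eq[OF pV] by auto
    hence "par ?p = v" using nb by auto
    moreover have "h v = Suc (h ?p)" "h ?p = Suc (h (par ?p))" using parV[OF v] parV[OF pV pr] by auto
    ultimately show False by simp
  qed
  have chr: "ch r = {v}" using nbhd_eq[OF pV] nb pr ch_mem[OF v] by auto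
  have all: "\<forall>u. h u = n \<longrightarrow> u \<in> V \<longrightarrow> u \<in> {r, v}" for n
  proof (induction n rule: less_induct)
    case (less n)
    show ?case
    proof (intro allI impI)
      fix u assume u: "h u = n" "u \<in> V"
      show "u \<in> {r, v}"
      proof (cases "u = r")
        case True thus ?thesis by simp
      next
        case False
        have pu: "par u \<in> V" "h (par u) < n" using parV[OF u(2) False] u by auto
        hence "par u \<in> {r, v}" using less.IH by blast
        moreover have "u \<in> ch (par u)" using ch_mem[OF u(2) False] .
        ultimately show ?thesis using chr lf by auto
      qed
    qed
  qed
  hence "V \<subseteq> {r, v}" by blast
  hence "card V \<le> card {r, v}" by (simp add: card_mono)
  also have "... \<le> 2" by (cases "r = v") auto
  finally show False using c3 by simp
qed

lemma exists_leaf: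
  assumes c3: "card V \<ge> 3" shows "\<exists>v\<in>V. v \<noteq> r \<and> ch v = {}"
proof -
  let ?A = "V - {r}"
  have "V \<noteq> {r}" using c3 by auto
  hence ne: "?A \<noteq> {}" using rV by auto
  have fA: "finite ?A" using finV by auto
  let ?m = "Max (h ` ?A)"
  have "?m \<in> h ` ?A" using fA ne by simp
  then obtain v where v: "v \<in> ?A" "h v = ?m" by (metis (no_types, lifting) imageE)
  have "ch v = {}"
  proof (rule ccontr)
    assume "ch v \<noteq> {}"
    then obtain u where u: "u \<in> ch v" by auto
    hence "u \<in> ?A" "h u = Suc (h v)" using parV unfolding ch_def by auto
    moreover have "h u \<le> ?m" using fA \<open>u \<in> ?A\<close> by simp
    ultimately show False using v by simp
  qed
  thus ?thesis using v by auto
qed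

end

lemma two_sigma:
  assumes sg: "simple_graph V E" and w: "w \<in> V" and ec: "edge_coloring E 2 c"
    and qm: "quasi_majority V E c" and ev: "even (deg E w)"
  shows "2 * sigma E c w = 3 * deg E w"
proof -
  let ?A = "nbhd E w"
  have fA: "finite ?A"
  proof -
    have "?A \<subseteq> V" using sg unfolding nbhd_def simple_graph_def by auto
    thus ?thesis using sg unfolding simple_graph_def by (meson finite_subset)
  qed
  define A1 where "A1 = {u\<in>?A. c {w, u} = 1}"
  define A2 where "A2 = {u\<in>?A. c {w, u} = 2}"
  have cols: "c {w, u} \<in> {1, 2}" if "u \<in> ?A" for u
  proof -
    have "c {w, u} \<in> {1..2}" using that ec unfolding nbhd_def edge_coloring_def by auto
    thus ?thesis by auto
  qed
  have AU: "?A = A1 \<union> A2" using cols unfolding A1_def A2_def by auto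
  have dis: "A1 \<inter> A2 = {}" unfolding A1_def A2_def by auto
  have f1: "finite A1" "finite A2" using fA unfolding A1_def A2_def by auto
  have "sigma E c w = sum (\<lambda>u. c {w, u}) A1 + sum (\<lambda>u. c {w, u}) A2"
    unfolding sigma_def using AU dis f1 by (simp add: sum.union_disjoint)
  also have "... = card A1 + 2 * card A2" unfolding A1_def A2_def by simp
  finally have s: "sigma E c w = card A1 + 2 * card A2" .
  have d: "deg E w = card A1 + card A2" unfolding deg_def using AU dis f1 by (simp add: card_Un_disjoint)
  have q: "card {u\<in>?A. c {w, u} = i} \<le> nat \<lceil>real (deg E w) / 2\<rceil>" for i
    using qm w unfolding quasi_majority_def by blast
  obtain k where k: "deg E w = 2*k" using ev by blast
  have hk: "(deg E w + 1) div 2 = k" using k by simp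
  have b1: "card A1 \<le> k" using q[of 1] unfolding A1_def ceil_half hk .
  have b2: "card A2 \<le> k" using q[of 2] unfolding A2_def ceil_half hk .
  have "card A1 = k" "card A2 = k" using b1 b2 d k by linarith+
  thus ?thesis using s k by simp
qed



theorem mainTheorem6:
  fixes V :: "'a set" and E :: "'a set set"
  assumes "is_tree V E" and "card V \<ge> 3"
  shows "chi_qm_sigma V E =
           (if \<not> (\<exists>u v. {u, v} \<in> E \<and> deg E u = deg E v \<and> even (deg E u)) then 2 else 3)"
proof -
  obtain r par h where rt: "rtree V E r par h" using tree_struct assms(1) by blast
  interpret T: rtree V E r par h by (rule rt)
  have sg: "simple_graph V E" using assms(1) unfolding is_tree_def by auto
  define Q where "Q k \<longleftrightarrow> (\<exists>c. edge_coloring E k c \<and> quasi_majority V E c \<and> nsd E c)" for k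
  have chi: "chi_qm_sigma V E = (LEAST k. Q k)" unfolding chi_qm_sigma_def Q_def by simp
  obtain v0 where v0: "v0 \<in> V" "v0 \<noteq> r" "T.ch v0 = {}" using T.exists_leaf assms(2) by blast
  have p0: "par v0 \<in> V" "deg E (par v0) \<ge> 2"
    using T.parV[OF v0(1,2)] T.leaf_par_deg[OF assms(2) v0] by auto
  have F1: "\<not> Q k" if k: "k \<le> 1" for k
  proof
    assume "Q k"
    then obtain c where c: "edge_coloring E k c" "quasi_majority V E c" unfolding Q_def by blast
    let ?p = "par v0"
    let ?A = "nbhd E ?p"
    have "\<forall>u\<in>?A. c {?p, u} = 1"
    proof
      fix u assume "u \<in> ?A"
      hence "{?p, u} \<in> E" unfolding nbhd_def by simp
      hence "c {?p, u} \<in> {1..k}" using c(1) unfolding edge_coloring_def by blast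
      thus "c {?p, u} = 1" using k by auto
    qed
    hence "{u\<in>?A. c {?p, u} = 1} = ?A" by auto
    hence "card {u\<in>?A. c {?p, u} = 1} = deg E ?p" unfolding deg_def by simp
    moreover have "card {u\<in>?A. c {?p, u} = 1} \<le> nat \<lceil>real (deg E ?p) / 2\<rceil>"
      using c(2) p0(1) unfolding quasi_majority_def by blast
    ultimately have "deg E ?p \<le> (deg E ?p + 1) div 2" using ceil_half by metis
    thus False using p0(2) by linarith
  qed
  have F2: "\<not> Q 2" if bad: "\<exists>u v. {u, v} \<in> E \<and> deg E u = deg E v \<and> even (deg E u)"
  proof
    assume "Q 2"
    then obtain c where c: "edge_coloring E 2 c" "quasi_majority V E c" "nsd E c" unfolding Q_def by blast
    obtain u v where uv: "{u, v} \<in> E" "deg E u = deg E v" "even (deg E u)" using bad by blast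
    have "u \<in> V" "v \<in> V" using uv(1) sg unfolding simple_graph_def by auto
    hence "2 * sigma E c u = 3 * deg E u" "2 * sigma E c v = 3 * deg E v"
      using two_sigma[OF sg _ c(1,2)] uv by auto
    hence "sigma E c u = sigma E c v" using uv(2) by simp
    thus False using c(3) uv(1) unfolding nsd_def by blast
  qed
  have F3: "Q 3"
  proof -
    have "\<exists>c. (\<forall>e\<in>E. c e \<in> {1,2,3}) \<and> quasi_majority V E c \<and> nsd E c"
    proof (rule T.GL)
      obtain L where "length L = card (T.ch r)" "set L \<subseteq> {1,2}" "QM L" using root_list by blast
      thus "\<exists>L. length L = card (T.ch r) \<and> set L \<subseteq> {1,2,3} \<and> QM L" by auto
    next
      fix v a K assume v: "v \<in> V" "v \<noteq> r" and a: "a \<in> {1,2,3::nat}" and K: "set K \<subseteq> {1,2,3}" "QM K"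
        "length K = deg E (par v)" "a \<in> set K"
      show "\<exists>L. length L = card (T.ch v) \<and> set L \<subseteq> {1,2,3} \<and> QM (a#L) \<and> sum_list (a#L) \<noteq> sum_list K"
      proof (cases "card (T.ch v) = 0")
        case True
        hence "T.ch v = {}" using T.ch_fin by auto
        hence "deg E (par v) \<ge> 2" using T.leaf_par_deg[OF assms(2) v] by blast
        moreover have "\<forall>x\<in>set K. (1::nat) \<le> x" using K(1) by auto
        ultimately have "sum_list K \<noteq> a" using leaf_ok[OF K(4)] K(3) by auto
        moreover have "QM [a]" unfolding QM_def by auto
        ultimately show ?thesis using True by (intro exI[of _ "[]"]) auto
      next
        case False
        thus ?thesis using three_step[OF a, of "card (T.ch v)" "sum_list K"] by auto
      qed
    qed
    moreover have "{1..3::nat} = {1,2,3}" by auto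
    ultimately show ?thesis unfolding Q_def edge_coloring_def by metis
  qed
  have F4: "Q 2" if good: "\<not> (\<exists>u v. {u, v} \<in> E \<and> deg E u = deg E v \<and> even (deg E u))"
  proof -
    have "\<exists>c. (\<forall>e\<in>E. c e \<in> {1,2}) \<and> quasi_majority V E c \<and> nsd E c"
    proof (rule T.GL)
      show "\<exists>L. length L = card (T.ch r) \<and> set L \<subseteq> {1,2} \<and> QM L" by (rule root_list)
    next
      fix v a K assume v: "v \<in> V" "v \<noteq> r" and a: "a \<in> {1,2::nat}" and K: "set K \<subseteq> {1,2}" "QM K"
        "length K = deg E (par v)" "a \<in> set K"
      let ?m = "card (T.ch v)"
      have z: "?m = 0 \<longrightarrow> sum_list K \<noteq> a"
      proof
        assume "?m = 0"
        hence "T.ch v = {}" using T.ch_fin by auto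
        hence "deg E (par v) \<ge> 2" using T.leaf_par_deg[OF assms(2) v] by blast
        moreover have "\<forall>x\<in>set K. (1::nat) \<le> x" using K(1) by auto
        ultimately show "sum_list K \<noteq> a" using leaf_ok[OF K(4)] K(3) by auto
      qed
      have o: "odd ?m \<longrightarrow> 2 * sum_list K \<noteq> 3 * (?m + 1)"
      proof (intro impI notI)
        assume om: "odd ?m" and eq: "2 * sum_list K = 3 * (?m + 1)"
        have "3*length K \<le> 2*sum_list K + 1 \<and> 2*sum_list K \<le> 3*length K + 1"
          by (rule two_bound[OF K(1,2)])
        hence lK: "length K = ?m + 1" using eq by presburger
        have dv: "deg E v = ?m + 1"
          using T.deg_eq[OF v(1), of a "\<lambda>_. a"] v(2) T.enum_ch(3) unfolding T.Kx_def by simp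
        have "{v, par v} \<in> E" using T.parV[OF v] by auto
        moreover have "deg E v = deg E (par v)" using dv lK K(3) by simp
        moreover have "even (deg E v)" using dv om by simp
        ultimately show False using good by blast
      qed
      show "\<exists>L. length L = ?m \<and> set L \<subseteq> {1,2} \<and> QM (a#L) \<and> sum_list (a#L) \<noteq> sum_list K"
        by (rule two_step[OF a z o])
    qed
    moreover have "{1..2::nat} = {1,2}" by auto
    ultimately show ?thesis unfolding Q_def edge_coloring_def by metis
  qed
  show ?thesis
  proof (cases "\<exists>u v. {u, v} \<in> E \<and> deg E u = deg E v \<and> even (deg E u)")
    case False
    have "(LEAST k. Q k) = 2"
    proof (rule Least_equality)
      show "Q 2" using F4 False by blast
      fix k assume "Q k" thus "2 \<le> k" using F1[of k] by linarith
    qed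
    thus ?thesis using chi False by simp
  next
    case True
    have "(LEAST k. Q k) = 3"
    proof (rule Least_equality)
      show "Q 3" by (rule F3)
      fix k assume qk: "Q k"
      show "3 \<le> k"
      proof (rule ccontr)
        assume "\<not> 3 \<le> k"
        hence "k \<le> 2" by simp
        hence "Q 2" using qk unfolding Q_def edge_coloring_def by fastforce
        thus False using F2 True by blast
      qed
    qed
    thus ?thesis using chi True by simp
  qed
qed

end
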